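(* The game $G_{FL}=(\omega^{<\omega},c_{00}(\omega))$ has the following three properties, and any game $G=(T,A)$ with these three properties is isomorphic in $\mathbf{Games}_A$ to $G_{FL}$: (1) $T$ and $A$ are countable; (2) every finite game admits a game embedding into $G$; (3) $G$ is ultrahomogeneous with respect to $(\mathrm{emb},\mathbf{FinGame})$, i.e. for every finite game $C$ and all game embeddings $f,g\colon C\to G$ there is an automorphism $u$ of $G$ in $\mathbf{Games}_A$ with $u\circ f=g$.
   Context: A game tree is $T\subseteq M^{<\omega}$ (some set $M$) closed under initial segments such that every $t\in T$ has an extension $t^\frown x\in T$; $|t|$ is the length, $t\restriction k$ the initial segment of length $k$. $\mathrm{Run}(T)=\{R\in M^\omega:R\restriction n\in T\ \forall n\}$. A game is $(T,A)$ with $A\subseteq\mathrm{Run}(T)$; finite if $\mathrm{Run}(T)$ is finite. A chronological map $f\colon T_1\to T_2$ satisfies $|f(t)|=|t|$, $f(t\restriction k)=f(t)\restriction k$, inducing $\bar f$ on runs via $\bar f(R)\restriction n=f(R\restriction n)$. $\mathbf{Games}_A$ is the category of games with A-morphisms (chronological $f$ with $\bar f[A_1]\subseteq A_2$); its isomorphisms (automorphisms) are bijective chronological maps $f$ with $\bar f[A_1]=A_2$. A game embedding is an injective chronological $f$ with $\bar f(R)\in A_2\iff R\in A_1$ for all runs $R$. $c_{00}(\omega)$ is the set of eventually zero sequences in $\omega^\omega=\mathrm{Run}(\omega^{<\omega})$. *)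

theory Defs
  imports Main "HOL-Library.Countable_Set"
begin

text \<open>Finite sequences are lists; t restricted to k is take k t. Runs are functions nat => 'm.\<close>

definition game_tree :: "'m list set \<Rightarrow> bool" where
  "game_tree T \<longleftrightarrow>
     (\<forall>t\<in>T. \<forall>k. take k t \<in> T) \<and> (\<forall>t\<in>T. \<exists>x. t @ [x] \<in> T)"

definition run_prefix :: "(nat \<Rightarrow> 'm) \<Rightarrow> nat \<Rightarrow> 'm list" where
  "run_prefix R n = map R [0..<n]"

definition Run :: "'m list set \<Rightarrow> (nat \<Rightarrow> 'm) set" where
  "Run T = {R. \<forall>n. run_prefix R n \<in> T}"

definition is_game :: "'m list set \<times> (nat \<Rightarrow> 'm) set \<Rightarrow> bool" where
  "is_game G \<longleftrightarrow> game_tree (fst G) \<and> snd G \<subseteq> Run (fst G)"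

definition finite_game :: "'m list set \<times> (nat \<Rightarrow> 'm) set \<Rightarrow> bool" where
  "finite_game G \<longleftrightarrow> is_game G \<and> finite (Run (fst G))"

definition chronological :: "('a list \<Rightarrow> 'b list) \<Rightarrow> 'a list set \<Rightarrow> 'b list set \<Rightarrow> bool" where
  "chronological f T1 T2 \<longleftrightarrow>
     (\<forall>t\<in>T1. f t \<in> T2 \<and> length (f t) = length t \<and> (\<forall>k. f (take k t) = take k (f t)))"

text \<open>Induced map on runs: (fbar f R) restricted to n equals f (R restricted to n).\<close>
definition fbar :: "('a list \<Rightarrow> 'b list) \<Rightarrow> (nat \<Rightarrow> 'a) \<Rightarrow> (nat \<Rightarrow> 'b)" where
  "fbar f R = (\<lambda>n. f (run_prefix R (Suc n)) ! n)"

definition game_iso ::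
  "('a list \<Rightarrow> 'b list) \<Rightarrow> 'a list set \<times> (nat \<Rightarrow> 'a) set \<Rightarrow> 'b list set \<times> (nat \<Rightarrow> 'b) set \<Rightarrow> bool" where
  "game_iso f G1 G2 \<longleftrightarrow> chronological f (fst G1) (fst G2) \<and> bij_betw f (fst G1) (fst G2)
      \<and> fbar f ` snd G1 = snd G2"

definition games_isomorphic ::
  "'a list set \<times> (nat \<Rightarrow> 'a) set \<Rightarrow> 'b list set \<times> (nat \<Rightarrow> 'b) set \<Rightarrow> bool" where
  "games_isomorphic G1 G2 \<longleftrightarrow> (\<exists>f. game_iso f G1 G2)"

definition game_embedding ::
  "('a list \<Rightarrow> 'b list) \<Rightarrow> 'a list set \<times> (nat \<Rightarrow> 'a) set \<Rightarrow> 'b list set \<times> (nat \<Rightarrow> 'b) set \<Rightarrow> bool" where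
  "game_embedding f G1 G2 \<longleftrightarrow> chronological f (fst G1) (fst G2) \<and> inj_on f (fst G1)
      \<and> (\<forall>R\<in>Run (fst G1). fbar f R \<in> snd G2 \<longleftrightarrow> R \<in> snd G1)"

definition c00 :: "(nat \<Rightarrow> nat) set" where
  "c00 = {R. \<exists>N. \<forall>n\<ge>N. R n = 0}"

definition G_FL :: "nat list set \<times> (nat \<Rightarrow> nat) set" where
  "G_FL = (UNIV, c00)"

definition countable_game :: "'m list set \<times> (nat \<Rightarrow> 'm) set \<Rightarrow> bool" where
  "countable_game G \<longleftrightarrow> countable (fst G) \<and> countable (snd G)"

text \<open>Property (2), relative to finite games whose moves have type 'c.\<close>
definition fin_universal ::
  "'c itself \<Rightarrow> 'm list set \<times> (nat \<Rightarrow> 'm) set \<Rightarrow> bool" where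
  "fin_universal _ G \<longleftrightarrow>
     (\<forall>C :: 'c list set \<times> (nat \<Rightarrow> 'c) set. finite_game C \<longrightarrow> (\<exists>f. game_embedding f C G))"

text \<open>Property (3), relative to finite games whose moves have type 'c.\<close>
definition fin_ultrahomogeneous ::
  "'c itself \<Rightarrow> 'm list set \<times> (nat \<Rightarrow> 'm) set \<Rightarrow> bool" where
  "fin_ultrahomogeneous _ G \<longleftrightarrow>
     (\<forall>(C :: 'c list set \<times> (nat \<Rightarrow> 'c) set) f g. finite_game C \<longrightarrow>
        game_embedding f C G \<longrightarrow> game_embedding g C G \<longrightarrow>
        (\<exists>u. game_iso u G G \<and> (\<forall>t\<in>fst C. u (f t) = g t)))"

end

theory Submission
  imports Defs
begin

lemma rp_length[simp]: "length (run_prefix R n) = n"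
  by (simp add: run_prefix_def)
lemma rp_nth[simp]: "i < n \<Longrightarrow> run_prefix R n ! i = R i"
  by (simp add: run_prefix_def)
lemma rp_Suc: "run_prefix R (Suc n) = run_prefix R n @ [R n]"
  by (simp add: run_prefix_def)
lemma rp_0[simp]: "run_prefix R 0 = []"
  by (simp add: run_prefix_def)
lemma take_rp[simp]: "take k (run_prefix R n) = run_prefix R (min k n)"
  by (simp add: run_prefix_def take_map take_upt min_def)
lemma rp_eq_iff: "run_prefix R n = run_prefix S n \<longleftrightarrow> (\<forall>i<n. R i = S i)"
  by (auto simp: run_prefix_def)
lemma rp_eq_run: "(\<forall>n. run_prefix R n = run_prefix S n) \<Longrightarrow> R = S"
proof
  fix i assume "\<forall>n. run_prefix R n = run_prefix S n"
  then have "run_prefix R (Suc i) = run_prefix S (Suc i)" by blast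
  then show "R i = S i" by (simp add: rp_eq_iff)
qed
lemma rp_mono: "run_prefix R n = run_prefix S n \<Longrightarrow> k \<le> n \<Longrightarrow> run_prefix R k = run_prefix S k"
  by (auto simp: rp_eq_iff)

lemma gt_take: "game_tree T \<Longrightarrow> t \<in> T \<Longrightarrow> take k t \<in> T"
  by (simp add: game_tree_def)

lemma run_ext:
  assumes gt: "game_tree T" and t: "t \<in> T"
  shows "\<exists>R\<in>Run T. run_prefix R (length t) = t"
proof -
  define nx where "nx = (\<lambda>s. if s \<in> T then s @ [SOME x. s @ [x] \<in> T] else s)"
  have nxT: "s \<in> T \<Longrightarrow> nx s \<in> T \<and> length (nx s) = Suc (length s) \<and> take (length s) (nx s) = s" for s
  proof -
    assume s: "s \<in> T"
    then have "\<exists>x. s @ [x] \<in> T" using gt by (simp add: game_tree_def)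
    then have "s @ [SOME x. s @ [x] \<in> T] \<in> T" by (rule someI_ex)
    then show ?thesis using s by (simp add: nx_def)
  qed
  define u where "u n = (nx ^^ n) t" for n
  have uT: "u n \<in> T \<and> length (u n) = length t + n" for n
    by (induction n) (auto simp: u_def nxT t)
  have upre: "take (length (u n)) (u (n + m)) = u n" for n m
  proof (induction m)
    case 0 then show ?case by simp
  next
    case (Suc m)
    have "u (n + Suc m) = nx (u (n + m))" by (simp add: u_def)
    then have "take (length (u (n+m))) (u (n + Suc m)) = u (n+m)" using nxT uT by metis
    then have "take (length (u n)) (u (n + Suc m)) = take (length (u n)) (u (n+m))"
      using uT by (metis min_def add_le_cancel_left le_add1 take_take)
    then show ?case using Suc by simp
  qed
  define R where "R i = u (Suc i) ! i" for i
  have key: "run_prefix R n = take n (u n)" for n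
  proof (rule nth_equalityI)
    show "length (run_prefix R n) = length (take n (u n))" using uT by simp
  next
    fix i assume "i < length (run_prefix R n)"
    then have i: "i < n" by simp
    then obtain m where m: "n = Suc i + m" using less_iff_Suc_add by auto
    have "u (Suc i) = take (length (u (Suc i))) (u n)" using upre[of "Suc i" m] m by simp
    then have "u (Suc i) ! i = u n ! i" using uT i
      by (metis add_Suc_right le_add2 less_Suc_eq_le nth_take)
    then show "run_prefix R n ! i = take n (u n) ! i" using i by (simp add: R_def)
  qed
  have "R \<in> Run T" unfolding Run_def using key uT gt_take[OF gt] by auto
  moreover have "run_prefix R (length t) = t"
    using key[of "length t"] upre[of 0 "length t"] uT by (simp add: u_def)
  ultimately show ?thesis by blast
qed

lemma chron_rp:
  assumes c: "chronological f T T2" and R: "R \<in> Run T"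
  shows "run_prefix (fbar f R) n = f (run_prefix R n)"
proof -
  have RT: "run_prefix R m \<in> T" for m using R by (simp add: Run_def)
  have L: "length (f (run_prefix R m)) = m" for m using c RT by (simp add: chronological_def)
  have tk: "f (take k (run_prefix R m)) = take k (f (run_prefix R m))" for k m
    using c RT by (simp add: chronological_def del: take_rp)
  show ?thesis
  proof (rule nth_equalityI)
    show "length (run_prefix (fbar f R) n) = length (f (run_prefix R n))" using L by simp
  next
    fix i assume "i < length (run_prefix (fbar f R) n)"
    then have i: "i < n" by simp
    have "f (run_prefix R (Suc i)) = take (Suc i) (f (run_prefix R n))"
      using tk[of "Suc i" n] i by (simp add: min_def)
    then have "f (run_prefix R (Suc i)) ! i = f (run_prefix R n) ! i" using i by simp
    then show "run_prefix (fbar f R) n ! i = f (run_prefix R n) ! i"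
      using i by (simp add: fbar_def)
  qed
qed

lemma chron_Run:
  assumes c: "chronological f T T2" and R: "R \<in> Run T"
  shows "fbar f R \<in> Run T2"
  using chron_rp[OF c R] c R by (auto simp: Run_def chronological_def)

lemma fbar_inj:
  assumes c: "chronological f T T2" and i: "inj_on f T"
  shows "inj_on (fbar f) (Run T)"
proof
  fix R S assume R: "R \<in> Run T" and S: "S \<in> Run T" and e: "fbar f R = fbar f S"
  have "run_prefix R n = run_prefix S n" for n
  proof -
    have "f (run_prefix R n) = f (run_prefix S n)" using chron_rp[OF c R] chron_rp[OF c S] e by metis
    then show ?thesis using i R S by (auto simp: Run_def inj_on_def)
  qed
  then show "R = S" using rp_eq_run by blast
qed

lemma fbar_surj:
  assumes c: "chronological f T T2" and b: "bij_betw f T T2" and tc: "\<forall>t\<in>T. \<forall>k. take k t \<in> T"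
    and R': "R' \<in> Run T2"
  shows "\<exists>R\<in>Run T. fbar f R = R'"
proof -
  define tt where "tt n = inv_into T f (run_prefix R' n)" for n
  have inT2: "run_prefix R' n \<in> T2" for n using R' by (simp add: Run_def)
  have ttT: "tt n \<in> T" and ftt: "f (tt n) = run_prefix R' n" for n
    using b inT2 unfolding tt_def bij_betw_def by (auto intro: inv_into_into f_inv_into_f)
  have len: "length (tt n) = n" for n using c ttT ftt
    by (metis chronological_def rp_length)
  have coh: "take k (tt n) = tt k" if "k \<le> n" for k n
  proof -
    have "f (take k (tt n)) = take k (f (tt n))" using c ttT by (simp add: chronological_def)
    also have "\<dots> = f (tt k)" using ftt that by (simp add: min_def)
    finally show ?thesis using b tc ttT by (auto simp: bij_betw_def inj_on_def)
  qed
  define R where "R i = tt (Suc i) ! i" for i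
  have pre: "run_prefix R n = tt n" for n
  proof (rule nth_equalityI)
    show "length (run_prefix R n) = length (tt n)" by (simp add: len)
  next
    fix i assume "i < length (run_prefix R n)"
    then have i: "i < n" by simp
    have "tt (Suc i) ! i = take (Suc i) (tt n) ! i" using coh[of "Suc i" n] i by simp
    also have "\<dots> = tt n ! i" by simp
    finally show "run_prefix R n ! i = tt n ! i" using i by (simp add: R_def)
  qed
  have RT: "R \<in> Run T" using pre ttT by (simp add: Run_def)
  have "fbar f R = R'"
    by (rule rp_eq_run) (simp add: chron_rp[OF c RT] pre ftt)
  then show ?thesis using RT by blast
qed

lemma fbar_bij:
  assumes c: "chronological f T T2" and b: "bij_betw f T T2" and tc: "\<forall>t\<in>T. \<forall>k. take k t \<in> T"
  shows "bij_betw (fbar f) (Run T) (Run T2)"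
  unfolding bij_betw_def
proof
  show "inj_on (fbar f) (Run T)" using fbar_inj[OF c] b by (simp add: bij_betw_def)
  show "fbar f ` Run T = Run T2"
    using chron_Run[OF c] fbar_surj[OF c b tc] by blast
qed

lemma fbar_comp:
  assumes c: "chronological e T1 T2" and c2: "chronological u T2 T3" and R: "R \<in> Run T1"
  shows "fbar (u \<circ> e) R = fbar u (fbar e R)"
proof -
  show ?thesis
  proof
    fix n
    have "fbar u (fbar e R) n = u (run_prefix (fbar e R) (Suc n)) ! n" by (simp add: fbar_def)
    also have "\<dots> = u (e (run_prefix R (Suc n))) ! n" using chron_rp[OF c R] by simp
    finally show "fbar (u \<circ> e) R n = fbar u (fbar e R) n" by (simp add: fbar_def)
  qed
qed

lemma fbar_cong:
  assumes R: "R \<in> Run T" and e: "\<forall>t\<in>T. f t = g t"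
  shows "fbar f R = fbar g R"
  using R e by (auto simp: fbar_def Run_def)

lemma chron_comp:
  assumes c: "chronological e T1 T2" and c2: "chronological u T2 T3"
  shows "chronological (u \<circ> e) T1 T3"
  using c c2 unfolding chronological_def by auto

definition tree_of :: "(nat \<Rightarrow> 'm) set \<Rightarrow> 'm list set" where
  "tree_of S = {run_prefix R n | R n. R \<in> S}"

lemma tree_of_gt: "game_tree (tree_of S)"
  unfolding game_tree_def
proof (intro conjI ballI allI)
  fix t k assume "t \<in> tree_of S"
  then obtain R n where "R \<in> S" "t = run_prefix R n" by (auto simp: tree_of_def)
  then show "take k t \<in> tree_of S" by (auto simp: tree_of_def)
next
  fix t assume "t \<in> tree_of S"
  then obtain R n where "R \<in> S" "t = run_prefix R n" by (auto simp: tree_of_def)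
  then have "t @ [R n] \<in> tree_of S" by (auto simp: tree_of_def rp_Suc[symmetric])
  then show "\<exists>x. t @ [x] \<in> tree_of S" by blast
qed

lemma tree_of_Run:
  assumes fin: "finite S"
  shows "Run (tree_of S) = S"
proof
  show "S \<subseteq> Run (tree_of S)" by (auto simp: Run_def tree_of_def)
next
  show "Run (tree_of S) \<subseteq> S"
  proof
    fix R assume "R \<in> Run (tree_of S)"
    then have "\<forall>n. \<exists>Q\<in>S. run_prefix R n = run_prefix Q n"
      by (auto simp: Run_def tree_of_def) (metis rp_length)
    then obtain q where q: "\<And>n. q n \<in> S \<and> run_prefix R n = run_prefix (q n) n" by metis
    have "q ` UNIV \<subseteq> S" using q by auto
    then have "finite (range q)" using fin finite_subset by blast
    then obtain y where "infinite (q -` {q y})"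
      using inf_img_fin_dom[of q UNIV] by auto
    moreover have "q -` {q y} = {n. q n = q y}" by auto
    ultimately obtain Q where Q: "infinite {n. q n = Q}" by auto
    have "R = Q"
    proof
      fix i
      obtain n where n: "n \<in> {n. q n = Q}" "Suc i \<le> n" using Q
        by (metis (full_types) infinite_nat_iff_unbounded_le)
      then have "run_prefix R n = run_prefix Q n" using q by auto
      then show "R i = Q i" using n by (auto simp: rp_eq_iff)
    qed
    from Q have "{n. q n = Q} \<noteq> {}" by (metis finite.emptyI)
    then obtain n where "q n = Q" by auto
    then show "R \<in> S" using q \<open>R = Q\<close> by metis
  qed
qed

lemma tree_of_fg:
  assumes "finite S" "B \<subseteq> S"
  shows "finite_game (tree_of S, B)"
  using assms tree_of_Run[OF assms(1)] tree_of_gt by (simp add: finite_game_def is_game_def)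

definition nm :: "('a list \<Rightarrow> 'a \<Rightarrow> 'b) \<Rightarrow> 'a list \<Rightarrow> 'b list" where
  "nm \<phi> t = map (\<lambda>i. \<phi> (take i t) (t!i)) [0..<length t]"

lemma nm_length[simp]: "length (nm \<phi> t) = length t"
  by (simp add: nm_def)
lemma nm_Nil[simp]: "nm \<phi> [] = []"
  by (simp add: nm_def)
lemma nm_take: "nm \<phi> (take k t) = take k (nm \<phi> t)"
proof (rule nth_equalityI)
  show "length (nm \<phi> (take k t)) = length (take k (nm \<phi> t))" by simp
next
  fix i assume "i < length (nm \<phi> (take k t))"
  then have i: "i < k" "i < length t" by auto
  then have "take i (take k t) = take i t" by (simp add: min_def)
  then show "nm \<phi> (take k t) ! i = take k (nm \<phi> t) ! i" using i by (simp add: nm_def)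
qed
lemma nm_snoc[simp]: "nm \<phi> (t @ [x]) = nm \<phi> t @ [\<phi> t x]"
  by (rule nth_equalityI) (auto simp: nm_def nth_append less_Suc_eq)
lemma nm_chron: "(\<forall>t\<in>T. nm \<phi> t \<in> T2) \<Longrightarrow> chronological (nm \<phi>) T T2"
  by (simp add: chronological_def nm_take)
lemma fbar_nm: "fbar (nm \<phi>) R n = \<phi> (run_prefix R n) (R n)"
  by (simp add: fbar_def rp_Suc nth_append)

lemma nm_inj:
  assumes tc: "\<forall>t\<in>T. \<forall>k. take k t \<in> T"
    and inj: "\<forall>t\<in>T. inj_on (\<phi> t) {x. t @ [x] \<in> T}"
  shows "inj_on (nm \<phi>) T"
proof -
  have "\<forall>s t. s \<in> T \<longrightarrow> t \<in> T \<longrightarrow> length s = n \<longrightarrow> length t = n \<longrightarrow> nm \<phi> s = nm \<phi> t \<longrightarrow> s = t" for n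
  proof (induction n)
    case 0 then show ?case by simp
  next
    case (Suc n)
    show ?case
    proof (intro allI impI)
      fix s t assume s: "s \<in> T" and t: "t \<in> T" and ls: "length s = Suc n" and lt: "length t = Suc n"
        and e: "nm \<phi> s = nm \<phi> t"
      obtain s' x where sx: "s = s' @ [x]" using ls by (metis length_Suc_conv_rev)
      obtain t' y where ty: "t = t' @ [y]" using lt by (metis length_Suc_conv_rev)
      have s'T: "s' \<in> T" using tc s sx by (metis butlast_conv_take butlast_snoc)
      have t'T: "t' \<in> T" using tc t ty by (metis butlast_conv_take butlast_snoc)
      have "nm \<phi> s' = nm \<phi> t'" and ph: "\<phi> s' x = \<phi> t' y" using e sx ty by auto
      then have st: "s' = t'" using Suc.IH s'T t'T ls lt sx ty by auto
      have "x = y" using inj s'T ph s t sx ty st by (auto simp: inj_on_def)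
      then show "s = t" using sx ty st by simp
    qed
  qed
  then show ?thesis by (auto simp: inj_on_def) (metis nm_length)
qed

lemma nm_surj:
  assumes e: "[] \<in> T" and sur: "\<forall>t\<in>T. \<forall>y. \<exists>x. t @ [x] \<in> T \<and> \<phi> t x = y"
  shows "\<exists>t\<in>T. nm \<phi> t = ys"
proof (induction ys rule: rev_induct)
  case Nil then show ?case using e by (intro bexI[of _ "[]"]) auto
next
  case (snoc y ys)
  then obtain t where t: "t \<in> T" "nm \<phi> t = ys" by auto
  then obtain x where "t @ [x] \<in> T" "\<phi> t x = y" using sur by blast
  then show ?case using t by (intro bexI[of _ "t @ [x]"]) auto
qed

definition thr :: "(nat \<Rightarrow> nat \<Rightarrow> 'm) \<Rightarrow> nat set \<Rightarrow> 'm list \<Rightarrow> nat set" where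
  "thr a J t = {j\<in>J. run_prefix (a j) (length t) = t}"

definition zc :: "(nat \<Rightarrow> nat \<Rightarrow> 'm) \<Rightarrow> nat set \<Rightarrow> 'm list \<Rightarrow> 'm \<Rightarrow> bool" where
  "zc a J t x \<longleftrightarrow> thr a J t \<noteq> {} \<and> x = a (LEAST j. j \<in> thr a J t) (length t)"

lemma K1:
  assumes k0: "k0 \<in> J"
  shows "\<exists>N. \<forall>n\<ge>N. zc a J (run_prefix (a k0) n) (a k0 n)"
proof -
  define R where "R = a k0"
  define Nj where "Nj j = (if a j = R then 0 else Suc (SOME i. a j i \<noteq> R i))" for j
  have Njp: "n \<ge> Nj j \<Longrightarrow> run_prefix (a j) n = run_prefix R n \<Longrightarrow> a j = R" for n j
  proof (rule ccontr)
    assume n: "n \<ge> Nj j" and p: "run_prefix (a j) n = run_prefix R n" and ne: "a j \<noteq> R"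
    then have "\<exists>i. a j i \<noteq> R i" by auto
    then have "a j (SOME i. a j i \<noteq> R i) \<noteq> R (SOME i. a j i \<noteq> R i)" by (rule someI_ex)
    moreover have "(SOME i. a j i \<noteq> R i) < n" using n ne by (simp add: Nj_def)
    ultimately show False using p by (auto simp: rp_eq_iff)
  qed
  define N where "N = (\<Sum>j\<le>k0. Nj j)"
  have "zc a J (run_prefix R n) (R n)" if n: "n \<ge> N" for n
  proof -
    have k0t: "k0 \<in> thr a J (run_prefix R n)" using k0 by (simp add: thr_def R_def)
    define L where "L = (LEAST j. j \<in> thr a J (run_prefix R n))"
    have L1: "L \<in> thr a J (run_prefix R n)" unfolding L_def using k0t by (rule LeastI)
    have L2: "L \<le> k0" unfolding L_def using k0t by (rule Least_le)
    have "Nj L \<le> N" unfolding N_def using L2 by (intro member_le_sum) auto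
    then have "a L = R" using L1 n Njp[of L n] by (simp add: thr_def)
    then show ?thesis using k0t by (auto simp: zc_def L_def[symmetric])
  qed
  then show ?thesis unfolding R_def by blast
qed

lemma K2:
  assumes z: "\<forall>n\<ge>N. zc a J (run_prefix R n) (R n)"
  shows "\<exists>j\<in>J. R = a j"
proof -
  define j0 where "j0 = (LEAST j. j \<in> thr a J (run_prefix R N))"
  have ne: "thr a J (run_prefix R N) \<noteq> {}" using z by (simp add: zc_def)
  have inv: "run_prefix (a j0) n = run_prefix R n \<and> (LEAST j. j \<in> thr a J (run_prefix R n)) = j0"
    if "n \<ge> N" for n
    using that
  proof (induction n rule: dec_induct)
    case base
    have "j0 \<in> thr a J (run_prefix R N)" unfolding j0_def using ne by (metis LeastI ex_in_conv)
    then show ?case by (simp add: thr_def j0_def)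
  next
    case (step n)
    have "R n = a j0 n" using z step.hyps step.IH by (simp add: zc_def)
    then have p: "run_prefix (a j0) (Suc n) = run_prefix R (Suc n)" using step.IH by (simp add: rp_Suc)
    have j0J: "j0 \<in> J" using ne unfolding j0_def thr_def by (metis (mono_tags, lifting) LeastI ex_in_conv mem_Collect_eq)
    then have jt: "j0 \<in> thr a J (run_prefix R (Suc n))" using p by (simp add: thr_def)
    have "(LEAST j. j \<in> thr a J (run_prefix R (Suc n))) = j0"
    proof (rule Least_equality)
      show "j0 \<in> thr a J (run_prefix R (Suc n))" by (rule jt)
    next
      fix y assume "y \<in> thr a J (run_prefix R (Suc n))"
      then have "y \<in> thr a J (run_prefix R n)" by (auto simp: thr_def rp_eq_iff)
      then show "j0 \<le> y" using step.IH by (metis Least_le)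
    qed
    then show ?case using p by simp
  qed
  have "R = a j0"
  proof
    fix i
    have "run_prefix (a j0) (N + Suc i) = run_prefix R (N + Suc i)" using inv by simp
    then show "R i = a j0 i" by (auto simp: rp_eq_iff)
  qed
  moreover have "j0 \<in> J" using ne unfolding j0_def thr_def by (metis (mono_tags, lifting) LeastI ex_in_conv mem_Collect_eq)
  ultimately show ?thesis by blast
qed

lemma fg_tree: "finite_game C \<Longrightarrow> game_tree (fst C)"
  by (simp add: finite_game_def is_game_def)
lemma fg_sub: "finite_game C \<Longrightarrow> snd C \<subseteq> Run (fst C)"
  by (simp add: finite_game_def is_game_def)

lemma child_move: "game_tree T \<Longrightarrow> s @ [x] \<in> T \<Longrightarrow> x \<in> (\<lambda>R. R (length s)) ` Run T"
proof -
  assume gt: "game_tree T" and sx: "s @ [x] \<in> T"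
  obtain R where R: "R \<in> Run T" "run_prefix R (length (s @ [x])) = s @ [x]"
    using run_ext[OF gt sx] by blast
  then have "R (length s) = x" by (metis length_append_singleton lessI nth_append_length rp_nth)
  then show ?thesis using R by blast
qed

lemma finite_children:
  assumes "finite_game C"
  shows "finite {x. s @ [x] \<in> fst C}"
proof -
  have "{x. s @ [x] \<in> fst C} \<subseteq> (\<lambda>R. R (length s)) ` Run (fst C)"
    using child_move[OF fg_tree[OF assms]] by blast
  then show ?thesis using assms by (simp add: finite_game_def finite_subset)
qed

lemma GFL_game: "is_game G_FL"
  by (simp add: is_game_def G_FL_def game_tree_def Run_def)

lemma c00_countable: "countable c00"
proof -
  have "c00 \<subseteq> range (\<lambda>xs n. if n < length xs then xs ! n else (0::nat))"
  proof
    fix R assume "R \<in> c00"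
    then obtain N where N: "\<forall>n\<ge>N. R n = 0" by (auto simp: c00_def)
    have "R = (\<lambda>n. if n < length (run_prefix R N) then run_prefix R N ! n else 0)"
      using N by (auto simp: fun_eq_iff)
    then show "R \<in> range (\<lambda>xs n. if n < length xs then xs ! n else (0::nat))" by blast
  qed
  then show ?thesis by (rule countable_subset) simp
qed

lemma GFL_countable: "countable_game G_FL"
  by (simp add: countable_game_def G_FL_def c00_countable)

lemma fbar_c00_iff: "fbar f R \<in> c00 \<longleftrightarrow> (\<exists>N. \<forall>n\<ge>N. fbar f R n = 0)"
  by (simp add: c00_def)

lemma GFL_universal: "fin_universal TYPE('c) G_FL"
  unfolding fin_universal_def
proof (intro allI impI)
  fix C :: "'c list set \<times> (nat \<Rightarrow> 'c) set"
  assume fg: "finite_game C"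
  obtain T A where C: "C = (T, A)" by (cases C) blast
  have gt: "game_tree T" using fg_tree[OF fg] C by simp
  have AR: "A \<subseteq> Run T" using fg_sub[OF fg] C by simp
  have finR: "finite (Run T)" using fg C by (simp add: finite_game_def)
  have cA: "countable A" using AR finR by (intro countable_finite) (rule finite_subset)
  define M where "M = (\<Union>R\<in>Run T. range R)"
  have cM: "countable M" unfolding M_def using finR by (intro countable_UN) (auto intro: countable_finite)
  define J :: "nat set" where "J = (if A = {} then {} else UNIV)"
  define a where "a = from_nat_into A"
  define \<phi> where "\<phi> t x = (if zc a J t x then 0 else Suc (to_nat_on M x))" for t x
  define f where "f = nm \<phi>"
  have chM: "x \<in> M" if tx: "t @ [x] \<in> T" for t x
  proof -
    obtain R where "R \<in> Run T" "x = R (length t)" using child_move[OF gt tx] by blast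
    then show ?thesis unfolding M_def by blast
  qed
  have tc: "\<forall>t\<in>T. \<forall>k. take k t \<in> T" using gt by (simp add: game_tree_def)
  have ch: "chronological f T (fst G_FL)" unfolding f_def G_FL_def by (rule nm_chron) simp
  have inj: "inj_on f T" unfolding f_def
  proof (rule nm_inj[OF tc], intro ballI)
    fix t assume "t \<in> T"
    show "inj_on (\<phi> t) {x. t @ [x] \<in> T}"
    proof
      fix x y assume x: "x \<in> {x. t @ [x] \<in> T}" and y: "y \<in> {x. t @ [x] \<in> T}" and e: "\<phi> t x = \<phi> t y"
      have "x \<in> M" "y \<in> M" using x y chM by auto
      show "x = y"
      proof (cases "zc a J t x")
        case True
        then have "zc a J t y" using e by (simp add: \<phi>_def split: if_splits)
        then show ?thesis using True by (simp add: zc_def)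
      next
        case False
        then have "\<not> zc a J t y" and "to_nat_on M x = to_nat_on M y" using e by (simp_all add: \<phi>_def split: if_splits)
        then show ?thesis using \<open>x \<in> M\<close> \<open>y \<in> M\<close> cM by (metis from_nat_into_to_nat_on)
      qed
    qed
  qed
  have runs: "fbar f R \<in> snd G_FL \<longleftrightarrow> R \<in> snd C" if R: "R \<in> Run (fst C)" for R
  proof -
    have "fbar f R \<in> c00 \<longleftrightarrow> (\<exists>N. \<forall>n\<ge>N. zc a J (run_prefix R n) (R n))"
    proof -
      have z: "(fbar f R n = 0) = zc a J (run_prefix R n) (R n)" for n
        unfolding f_def fbar_nm \<phi>_def by simp
      show ?thesis by (simp only: fbar_c00_iff z)
    qed
    also have "\<dots> \<longleftrightarrow> R \<in> A"
    proof
      assume "\<exists>N. \<forall>n\<ge>N. zc a J (run_prefix R n) (R n)"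
      then obtain j where "j \<in> J" "R = a j" using K2 by metis
      then show "R \<in> A" unfolding J_def a_def by (auto split: if_splits intro: from_nat_into)
    next
      assume "R \<in> A"
      assume RA: "R \<in> A"
      then obtain k0 where "from_nat_into A k0 = R" using from_nat_into_surj[OF cA] by blast
      moreover have "k0 \<in> J" using RA by (auto simp: J_def)
      ultimately have "a k0 = R" "k0 \<in> J" by (simp_all add: a_def)
      then show "\<exists>N. \<forall>n\<ge>N. zc a J (run_prefix R n) (R n)" using K1 by metis
    qed
    finally show ?thesis by (simp add: G_FL_def C)
  qed
  have "game_embedding f C G_FL" unfolding game_embedding_def
  proof (intro conjI)
    show "chronological f (fst C) (fst G_FL)" using ch C by simp
    show "inj_on f (fst C)" using inj C by simp
    show "\<forall>R\<in>Run (fst C). (fbar f R \<in> snd G_FL) = (R \<in> snd C)" using runs by blast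
  qed
  then show "\<exists>f. game_embedding f C G_FL" by blast
qed

lemma perm_ext:
  fixes p :: "nat \<Rightarrow> nat"
  assumes fin: "finite D" and inj: "inj_on p D"
  shows "\<exists>\<sigma>. bij \<sigma> \<and> (\<forall>y\<in>D. \<sigma> y = p y)"
proof -
  define E1 where "E1 = UNIV - D"
  define E2 where "E2 = UNIV - p ` D"
  have i1: "infinite E1" unfolding E1_def using fin by (simp add: Diff_infinite_finite)
  have i2: "infinite E2" unfolding E2_def using fin by (simp add: Diff_infinite_finite)
  define b where "b = from_nat_into E2 \<circ> to_nat_on E1"
  have bb: "bij_betw b E1 E2" unfolding b_def
    using to_nat_on_infinite[OF _ i1] bij_betw_from_nat_into[OF _ i2] by (auto intro: bij_betw_trans)
  define \<sigma> where "\<sigma> x = (if x \<in> D then p x else b x)" for x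
  have "bij_betw \<sigma> D (p ` D)" unfolding \<sigma>_def using inj
    by (simp add: bij_betw_def inj_on_def)
  moreover have "bij_betw \<sigma> E1 E2" using bb unfolding \<sigma>_def
    by (rule bij_betw_cong[THEN iffD1, rotated]) (auto simp: E1_def)
  ultimately have "bij_betw \<sigma> (D \<union> E1) (p ` D \<union> E2)"
    by (rule bij_betw_combine) (auto simp: E2_def)
  moreover have "D \<union> E1 = UNIV" "p ` D \<union> E2 = UNIV" by (auto simp: E1_def E2_def)
  ultimately have "bij \<sigma>" by simp
  then show ?thesis by (auto simp: \<sigma>_def)
qed

lemma snoc_chron:
  assumes c: "chronological h T T2" and s: "s @ [x] \<in> T"
  shows "h (s @ [x]) = h s @ [last (h (s @ [x]))]"
proof -
  have l: "length (h (s @ [x])) = Suc (length s)" using c s by (simp add: chronological_def)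
  have "h s = take (length s) (h (s @ [x]))" using c s unfolding chronological_def
    by (metis append_eq_conv_conj)
  then have "h s = butlast (h (s @ [x]))" using l by (simp add: butlast_conv_take)
  moreover have "h (s @ [x]) \<noteq> []" using l by auto
  ultimately show ?thesis by simp
qed

lemma GFL_homog: "fin_ultrahomogeneous TYPE('c) G_FL"
  unfolding fin_ultrahomogeneous_def
proof (intro allI impI)
  fix C :: "'c list set \<times> (nat \<Rightarrow> 'c) set" and f g
  assume fg: "finite_game C" and ef: "game_embedding f C G_FL" and eg: "game_embedding g C G_FL"
  obtain T A where C: "C = (T, A)" by (cases C) blast
  have gt: "game_tree T" using fg_tree[OF fg] C by simp
  have tc: "\<forall>t\<in>T. \<forall>k. take k t \<in> T" using gt by (simp add: game_tree_def)
  have cf: "chronological f T UNIV" and inf: "inj_on f T"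
    and rf: "\<forall>R\<in>Run T. fbar f R \<in> c00 \<longleftrightarrow> R \<in> A"
    using ef C by (auto simp: game_embedding_def G_FL_def)
  have cg: "chronological g T UNIV" and ing: "inj_on g T"
    and rg: "\<forall>R\<in>Run T. fbar g R \<in> c00 \<longleftrightarrow> R \<in> A"
    using eg C by (auto simp: game_embedding_def G_FL_def)
  have lenf: "length (f s) = length s" if "s \<in> T" for s using cf that by (simp add: chronological_def)
  have takef: "f (take k s) = take k (f s)" if "s \<in> T" for s k using cf that by (simp add: chronological_def)
  define F where "F = f ` T"
  have Ftc: "take k t \<in> F" if "t \<in> F" for t k
    using that tc takef unfolding F_def by (metis imageE imageI)
  define D where "D t = {y. t @ [y] \<in> F}" for t
  define pm where "pm t y = last (g (inv_into T f (t @ [y])))" for t y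
  have dec: "take (length t) s1 = s0" if "s0 \<in> T" "f s0 = t" "s1 \<in> T" "f s1 = t @ [y]" for s0 s1 t y
  proof -
    have "f (take (length t) s1) = take (length t) (f s1)" using takef that by blast
    also have "\<dots> = t" using that by simp
    finally show ?thesis using inf that tc by (auto simp: inj_on_def)
  qed
  have lenS: "length s1 = Suc (length t)" if "s1 \<in> T" "f s1 = t @ [y]" for s1 t y
    using lenf[of s1] that by simp
  have props: "finite (D t) \<and> inj_on (pm t) (D t)" if tF: "t \<in> F" for t
  proof -
    obtain s0 where s0: "s0 \<in> T" "f s0 = t" using tF by (auto simp: F_def)
    have ls0: "length s0 = length t" using lenf s0 by auto
    have ch: "\<exists>x. s1 = s0 @ [x] \<and> s0 @ [x] \<in> T" if "s1 \<in> T" "f s1 = t @ [y]" for s1 y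
    proof -
      have "take (length t) s1 = s0" using dec s0 that by blast
      moreover have "length s1 = Suc (length t)" using lenS that by blast
      ultimately have "s1 = s0 @ [s1 ! length t]" by (metis take_Suc_conv_app_nth lessI take_all order_refl)
      then show ?thesis using that by (intro exI[of _ "s1 ! length t"]) simp
    qed
    have "D t \<subseteq> (\<lambda>x. last (f (s0 @ [x]))) ` {x. s0 @ [x] \<in> T}"
    proof
      fix y assume "y \<in> D t"
      then obtain s1 where s1: "s1 \<in> T" "f s1 = t @ [y]" by (auto simp: D_def F_def)
      then obtain x where "s1 = s0 @ [x]" "s0 @ [x] \<in> T" using ch by blast
      then show "y \<in> (\<lambda>x. last (f (s0 @ [x]))) ` {x. s0 @ [x] \<in> T}" using s1 by force
    qed
    moreover have "finite {x. s0 @ [x] \<in> T}" using finite_children[OF fg] C by simp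
    ultimately have finD: "finite (D t)" by (meson finite_imageI finite_subset)
    have injp: "inj_on (pm t) (D t)"
    proof
      fix y y' assume y: "y \<in> D t" and y': "y' \<in> D t" and e: "pm t y = pm t y'"
      define s1 where "s1 = inv_into T f (t @ [y])"
      define s1' where "s1' = inv_into T f (t @ [y'])"
      have s1: "s1 \<in> T" "f s1 = t @ [y]" using y unfolding s1_def D_def F_def
        by (auto intro: inv_into_into f_inv_into_f)
      have s1': "s1' \<in> T" "f s1' = t @ [y']" using y' unfolding s1'_def D_def F_def
        by (auto intro: inv_into_into f_inv_into_f)
      obtain x where x: "s1 = s0 @ [x]" "s0 @ [x] \<in> T" using ch s1 by blast
      obtain x' where x': "s1' = s0 @ [x']" "s0 @ [x'] \<in> T" using ch s1' by blast
      have "g s1 = g s0 @ [last (g s1)]" using snoc_chron[OF cg x(2)] x by simp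
      moreover have "g s1' = g s0 @ [last (g s1')]" using snoc_chron[OF cg x'(2)] x' by simp
      moreover have "last (g s1) = last (g s1')" using e by (simp add: pm_def s1_def s1'_def)
      ultimately have "g s1 = g s1'" by simp
      then have "s1 = s1'" using ing s1 s1' by (auto simp: inj_on_def)
      then show "y = y'" using s1 s1' by simp
    qed
    show ?thesis using finD injp by blast
  qed
  define \<sigma> where "\<sigma> t = (if t \<in> F then (SOME \<sigma>. bij \<sigma> \<and> (\<forall>y\<in>D t. \<sigma> y = pm t y)) else id)" for t
  have \<sigma>F: "bij (\<sigma> t) \<and> (\<forall>y\<in>D t. \<sigma> t y = pm t y)" if "t \<in> F" for t
  proof -
    have "\<exists>\<sigma>. bij \<sigma> \<and> (\<forall>y\<in>D t. \<sigma> y = pm t y)" using perm_ext props[OF that] by blast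
    then have "bij (SOME \<sigma>. bij \<sigma> \<and> (\<forall>y\<in>D t. \<sigma> y = pm t y)) \<and> (\<forall>y\<in>D t. (SOME \<sigma>. bij \<sigma> \<and> (\<forall>y\<in>D t. \<sigma> y = pm t y)) y = pm t y)"
      by (rule someI_ex)
    then show ?thesis using that unfolding \<sigma>_def by simp
  qed
  have \<sigma>nF: "\<sigma> t = id" if "t \<notin> F" for t using that by (simp add: \<sigma>_def)
  have \<sigma>bij: "bij (\<sigma> t)" for t using \<sigma>F \<sigma>nF by (cases "t \<in> F") auto
  define u where "u = nm \<sigma>"
  have cu: "chronological u UNIV UNIV" unfolding u_def by (rule nm_chron) simp
  have uinj: "inj_on u UNIV" unfolding u_def
    by (rule nm_inj) (auto intro: bij_is_inj[OF \<sigma>bij] inj_on_subset)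
  have usurj: "\<exists>t\<in>UNIV. u t = ys" for ys unfolding u_def
  proof (rule nm_surj)
    show "\<forall>t\<in>UNIV. \<forall>y. \<exists>x. t @ [x] \<in> UNIV \<and> \<sigma> t x = y"
      using \<sigma>bij by (metis UNIV_I bij_pointE)
  qed simp
  have bu: "bij_betw u UNIV UNIV" using uinj usurj by (auto simp: bij_betw_def) (metis rangeI)
  have uf: "u (f s) = g s" if "s \<in> T" for s
    using that
  proof (induction s rule: rev_induct)
    case Nil
    have "f [] = []" "g [] = []" using lenf[OF Nil] cg Nil by (auto simp: chronological_def)
    then show ?case by (simp add: u_def)
  next
    case (snoc x s)
    have sT: "s \<in> T" using tc snoc.prems by (metis butlast_conv_take butlast_snoc)
    define y where "y = last (f (s @ [x]))"
    have fs: "f (s @ [x]) = f s @ [y]" unfolding y_def using snoc_chron[OF cf snoc.prems] .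
    have tF: "f s \<in> F" using sT by (simp add: F_def)
    have yD: "y \<in> D (f s)" using fs snoc.prems by (auto simp: D_def F_def) (metis imageI)
    have "inv_into T f (f s @ [y]) = s @ [x]" using fs snoc.prems inf by (metis inv_into_f_f)
    then have "\<sigma> (f s) y = last (g (s @ [x]))" using \<sigma>F[OF tF] yD by (simp add: pm_def)
    then have "u (f (s @ [x])) = g s @ [last (g (s @ [x]))]"
      using fs snoc.IH[OF sT] by (simp add: u_def)
    also have "\<dots> = g (s @ [x])" using snoc_chron[OF cg snoc.prems] by simp
    finally show ?case .
  qed
  have cond: "fbar u R \<in> c00 \<longleftrightarrow> R \<in> c00" for R
  proof (cases "\<forall>n. run_prefix R n \<in> F")
    case True
    then have RF: "R \<in> Run F" by (simp add: Run_def)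
    have cfF: "chronological f T F" using cf by (auto simp: chronological_def F_def)
    have bfF: "bij_betw f T F" using inf by (simp add: bij_betw_def F_def)
    obtain RC where RC: "RC \<in> Run T" "fbar f RC = R" using fbar_surj[OF cfF bfF tc RF] by blast
    have "fbar u R = fbar (u \<circ> f) RC" using fbar_comp[OF cf cu RC(1)] RC by simp
    also have "\<dots> = fbar g RC" by (rule fbar_cong[OF RC(1)]) (simp add: uf)
    finally show ?thesis using rf rg RC by auto
  next
    case False
    then obtain n0 where n0: "run_prefix R n0 \<notin> F" by blast
    have ev: "fbar u R n = R n" if "n \<ge> n0" for n
    proof -
      have "run_prefix R n \<notin> F"
      proof
        assume "run_prefix R n \<in> F"
        then have "take n0 (run_prefix R n) \<in> F" by (rule Ftc)
        then show False using n0 that by (simp add: min_def)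
      qed
      then show ?thesis by (simp add: u_def fbar_nm \<sigma>nF)
    qed
    show ?thesis
    proof
      assume "fbar u R \<in> c00"
      then obtain N where "\<forall>n\<ge>N. fbar u R n = 0" by (auto simp: c00_def)
      then have "\<forall>n\<ge>max N n0. R n = 0" using ev by (metis max.bounded_iff)
      then show "R \<in> c00" unfolding c00_def by blast
    next
      assume "R \<in> c00"
      then obtain N where "\<forall>n\<ge>N. R n = 0" by (auto simp: c00_def)
      then have "\<forall>n\<ge>max N n0. fbar u R n = 0" using ev by (metis max.bounded_iff)
      then show "fbar u R \<in> c00" unfolding c00_def by blast
    qed
  qed
  have "fbar u ` c00 = c00"
  proof
    show "fbar u ` c00 \<subseteq> c00" using cond by blast
  next
    show "c00 \<subseteq> fbar u ` c00"
    proof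
      fix R' assume R': "R' \<in> c00"
      have "R' \<in> Run UNIV" by (simp add: Run_def)
      then obtain R where "fbar u R = R'" using fbar_surj[OF cu bu] by auto
      then show "R' \<in> fbar u ` c00" using cond R' by blast
    qed
  qed
  then have "game_iso u G_FL G_FL" using cu bu by (simp add: game_iso_def G_FL_def)
  moreover have "\<forall>t\<in>fst C. u (f t) = g t" using uf C by simp
  ultimately show "\<exists>u. game_iso u G_FL G_FL \<and> (\<forall>t\<in>fst C. u (f t) = g t)" by blast
qed

lemma chron_mono: "chronological f T T2 \<Longrightarrow> T' \<subseteq> T \<Longrightarrow> chronological f T' T2"
  by (auto simp: chronological_def)

lemma tree_of_mono: "S' \<subseteq> S \<Longrightarrow> tree_of S' \<subseteq> tree_of S"
  by (auto simp: tree_of_def)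

lemma iso_A:
  assumes iso: "game_iso u (T, A) (T, A)" and AR: "A \<subseteq> Run T" and tc: "\<forall>t\<in>T. \<forall>k. take k t \<in> T"
    and x: "x \<in> Run T"
  shows "fbar u x \<in> A \<longleftrightarrow> x \<in> A"
proof
  have c: "chronological u T T" and b: "bij_betw u T T" and im: "fbar u ` A = A"
    using iso by (auto simp: game_iso_def)
  have inj: "inj_on (fbar u) (Run T)" using fbar_inj[OF c] b by (simp add: bij_betw_def)
  assume "fbar u x \<in> A"
  then obtain y where y: "y \<in> A" "fbar u y = fbar u x" using im by (metis imageE)
  then have "y = x" using inj AR x by (auto simp: inj_on_def)
  then show "x \<in> A" using y by simp
next
  assume "x \<in> A" then show "fbar u x \<in> A" using iso by (auto simp: game_iso_def)
qed

lemma transfer: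
  fixes T :: "'m list set" and A and S :: "(nat \<Rightarrow> nat) set"
  assumes gt: "game_tree T" and AR: "A \<subseteq> Run T"
    and U: "fin_universal TYPE(nat) (T, A)" and H: "fin_ultrahomogeneous TYPE(nat) (T, A)"
    and S: "finite S" "B \<subseteq> S" "r0 \<in> S"
    and R: "R \<in> Run T" and st: "r0 \<in> B \<longleftrightarrow> R \<in> A"
  shows "\<exists>e. game_embedding e (tree_of S, B) (T, A) \<and> e (run_prefix r0 n) = run_prefix R n"
proof -
  have tc: "\<forall>t\<in>T. \<forall>k. take k t \<in> T" using gt by (simp add: game_tree_def)
  have fD: "finite_game (tree_of S, B)" using S by (intro tree_of_fg)
  then obtain e0 where e0: "game_embedding e0 (tree_of S, B) (T, A)"
    using U unfolding fin_universal_def by blast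
  have ce0: "chronological e0 (tree_of S) T" and ie0: "inj_on e0 (tree_of S)"
    and re0: "\<forall>R\<in>Run (tree_of S). fbar e0 R \<in> A \<longleftrightarrow> R \<in> B"
    using e0 by (auto simp: game_embedding_def)
  have RS: "Run (tree_of S) = S" using tree_of_Run[OF S(1)] .
  have sub: "tree_of {r0} \<subseteq> tree_of S" using S by (intro tree_of_mono) auto
  have fC: "finite_game (tree_of {r0}, B \<inter> {r0})" by (rule tree_of_fg) auto
  have R0: "Run (tree_of {r0}) = {r0}" by (rule tree_of_Run) simp
  have f: "game_embedding e0 (tree_of {r0}, B \<inter> {r0}) (T, A)"
    unfolding game_embedding_def fst_conv snd_conv
  proof (intro conjI)
    show "chronological e0 (tree_of {r0}) T" using chron_mono[OF ce0 sub] .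
    show "inj_on e0 (tree_of {r0})" using inj_on_subset[OF ie0 sub] .
    show "\<forall>R\<in>Run (tree_of {r0}). (fbar e0 R \<in> A) = (R \<in> B \<inter> {r0})"
      using R0 re0 RS S by auto
  qed
  define g where "g s = run_prefix R (length s)" for s :: "nat list"
  have RT: "run_prefix R k \<in> T" for k using R by (simp add: Run_def)
  have cg: "chronological g (tree_of {r0}) T"
    unfolding chronological_def g_def using RT by (auto simp: min.commute)
  have gr: "fbar g r0 = R"
  proof (rule rp_eq_run, intro allI)
    fix k
    have "r0 \<in> Run (tree_of {r0})" using R0 by simp
    then show "run_prefix (fbar g r0) k = run_prefix R k" using chron_rp[OF cg] by (simp add: g_def)
  qed
  have gemb: "game_embedding g (tree_of {r0}, B \<inter> {r0}) (T, A)"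
    unfolding game_embedding_def fst_conv snd_conv
  proof (intro conjI)
    show "chronological g (tree_of {r0}) T" by (rule cg)
    show "inj_on g (tree_of {r0})"
      by (auto simp: inj_on_def tree_of_def g_def) (metis rp_length)
    show "\<forall>R\<in>Run (tree_of {r0}). (fbar g R \<in> A) = (R \<in> B \<inter> {r0})"
      using R0 gr st by auto
  qed
  have "\<exists>u. game_iso u (T, A) (T, A) \<and> (\<forall>s\<in>fst (tree_of {r0}, B \<inter> {r0}). u (e0 s) = g s)"
    using H[unfolded fin_ultrahomogeneous_def, rule_format, OF fC f gemb] .
  then obtain u where u: "game_iso u (T, A) (T, A)" and ue: "\<forall>s\<in>tree_of {r0}. u (e0 s) = g s"
    by auto
  have cu: "chronological u T T" and bu: "bij_betw u T T" using u by (auto simp: game_iso_def)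
  define e where "e = u \<circ> e0"
  have "game_embedding e (tree_of S, B) (T, A)"
    unfolding game_embedding_def fst_conv snd_conv
  proof (intro conjI)
    show ce: "chronological e (tree_of S) T" unfolding e_def by (rule chron_comp[OF ce0 cu])
    have "e0 ` tree_of S \<subseteq> T" using ce0 by (auto simp: chronological_def)
    then show "inj_on e (tree_of S)" unfolding e_def using ie0 bu
      by (auto intro: comp_inj_on inj_on_subset simp: bij_betw_def)
    show "\<forall>R\<in>Run (tree_of S). (fbar e R \<in> A) = (R \<in> B)"
    proof
      fix R' assume R': "R' \<in> Run (tree_of S)"
      have "fbar e R' = fbar u (fbar e0 R')" unfolding e_def by (rule fbar_comp[OF ce0 cu R'])
      moreover have "fbar e0 R' \<in> Run T" by (rule chron_Run[OF ce0 R'])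
      ultimately show "(fbar e R' \<in> A) = (R' \<in> B)" using iso_A[OF u AR tc] re0 R' by auto
    qed
  qed
  moreover have "e (run_prefix r0 n) = run_prefix R n"
  proof -
    have "run_prefix r0 n \<in> tree_of {r0}" by (auto simp: tree_of_def)
    then show ?thesis using ue by (simp add: e_def g_def)
  qed
  ultimately show ?thesis by blast
qed

lemma G_root:
  assumes U: "fin_universal TYPE(nat) (T, A)"
  shows "[] \<in> T"
proof -
  have "finite_game (tree_of {\<lambda>_::nat. 0::nat}, {})" by (rule tree_of_fg) auto
  then obtain e where e: "game_embedding e (tree_of {\<lambda>_::nat. 0::nat}, {}) (T, A)"
    using U unfolding fin_universal_def by blast
  have "[] \<in> tree_of {\<lambda>_::nat. 0::nat}" unfolding tree_of_def by (metis (mono_tags) mem_Collect_eq rp_0 singletonI)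
  then have "e [] \<in> T \<and> length (e []) = 0" using e by (auto simp: game_embedding_def chronological_def)
  then show ?thesis by (metis length_0_conv)
qed

lemma G_dense:
  fixes T :: "'m list set"
  assumes gt: "game_tree T" and AR: "A \<subseteq> Run T"
    and U: "fin_universal TYPE(nat) (T, A)" and H: "fin_ultrahomogeneous TYPE(nat) (T, A)"
    and t: "t \<in> T"
  shows "\<exists>R\<in>A. run_prefix R (length t) = t"
proof -
  obtain R where R: "R \<in> Run T" "run_prefix R (length t) = t" using run_ext[OF gt t] by blast
  show ?thesis
  proof (cases "R \<in> A")
    case True then show ?thesis using R by blast
  next
    case False
    define n where "n = length t"
    define r1 :: "nat \<Rightarrow> nat" where "r1 = (\<lambda>_. 0)"
    define r2 :: "nat \<Rightarrow> nat" where "r2 = (\<lambda>i. if i = n then 1 else 0)"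
    have r12: "r1 \<noteq> r2" by (auto simp: r1_def r2_def fun_eq_iff)
    have "\<exists>e. game_embedding e (tree_of {r1, r2}, {r2}) (T, A) \<and> e (run_prefix r1 n) = run_prefix R n"
      by (rule transfer[OF gt AR U H]) (use r12 False R in auto)
    then obtain e where e: "game_embedding e (tree_of {r1, r2}, {r2}) (T, A)"
      and et: "e (run_prefix r1 n) = run_prefix R n" by blast
    have ce: "chronological e (tree_of {r1, r2}) T" using e by (simp add: game_embedding_def)
    have RS: "Run (tree_of {r1, r2}) = {r1, r2}" by (rule tree_of_Run) simp
    have r2R: "r2 \<in> Run (tree_of {r1, r2})" using RS by simp
    have "fbar e r2 \<in> A" using e r2R by (auto simp: game_embedding_def)
    moreover have "run_prefix (fbar e r2) n = t"
    proof -
      have "run_prefix r2 n = run_prefix r1 n" by (auto simp: rp_eq_iff r1_def r2_def)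
      then show ?thesis using chron_rp[OF ce r2R, of n] et R by (simp add: n_def)
    qed
    ultimately show ?thesis by (auto simp: n_def)
  qed
qed

lemma G_infch:
  fixes T :: "'m list set"
  assumes gt: "game_tree T" and AR: "A \<subseteq> Run T"
    and U: "fin_universal TYPE(nat) (T, A)" and H: "fin_ultrahomogeneous TYPE(nat) (T, A)"
    and t: "t \<in> T"
  shows "infinite {x. t @ [x] \<in> T}"
proof
  assume fin: "finite {x. t @ [x] \<in> T}"
  define X where "X = {x. t @ [x] \<in> T}"
  define m where "m = card X"
  obtain R where R: "R \<in> Run T" "run_prefix R (length t) = t" using run_ext[OF gt t] by blast
  define n where "n = length t"
  define r :: "nat \<Rightarrow> nat \<Rightarrow> nat" where "r j = (\<lambda>i. if i = n then j else 0)" for j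
  define S where "S = r ` {..m}"
  define B where "B = (if R \<in> A then S else {})"
  have finS: "finite S" by (simp add: S_def)
  have "\<exists>e. game_embedding e (tree_of S, B) (T, A) \<and> e (run_prefix (r 0) n) = run_prefix R n"
    by (rule transfer[OF gt AR U H finS]) (use R in \<open>auto simp: B_def S_def\<close>)
  then obtain e where e: "game_embedding e (tree_of S, B) (T, A)"
    and et: "e (run_prefix (r 0) n) = run_prefix R n" by blast
  have ce: "chronological e (tree_of S) T" and ie: "inj_on e (tree_of S)"
    using e by (auto simp: game_embedding_def)
  define h where "h j = last (e (run_prefix (r j) (Suc n)))" for j
  have inT: "run_prefix (r j) k \<in> tree_of S" if "j \<le> m" for j k
    using that by (auto simp: tree_of_def S_def)
  have pre: "run_prefix (r j) n = run_prefix (r 0) n" for j by (auto simp: rp_eq_iff r_def)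
  have eq: "e (run_prefix (r j) (Suc n)) = t @ [h j]" if "j \<le> m" for j
  proof -
    have "e (run_prefix (r j) n @ [r j n]) = e (run_prefix (r j) n) @ [last (e (run_prefix (r j) n @ [r j n]))]"
      using snoc_chron[OF ce] inT[OF that, of "Suc n"] by (simp add: rp_Suc)
    moreover have "e (run_prefix (r j) n) = t" using et pre[of j] R by (simp add: n_def)
    ultimately show ?thesis by (simp add: h_def rp_Suc)
  qed
  have hX: "h ` {..m} \<subseteq> X"
  proof
    fix x assume "x \<in> h ` {..m}"
    then obtain j where j: "j \<le> m" "x = h j" by auto
    have "e (run_prefix (r j) (Suc n)) \<in> T" using ce inT[OF j(1)] by (simp add: chronological_def)
    then show "x \<in> X" using eq[OF j(1)] j by (simp add: X_def)
  qed
  have hinj: "inj_on h {..m}"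
  proof
    fix j k assume j: "j \<in> {..m}" and k: "k \<in> {..m}" and hk: "h j = h k"
    then have "e (run_prefix (r j) (Suc n)) = e (run_prefix (r k) (Suc n))" using eq by simp
    then have "run_prefix (r j) (Suc n) = run_prefix (r k) (Suc n)"
      using ie inT j k by (auto simp: inj_on_def)
    then have "r j n = r k n" by (auto simp: rp_eq_iff)
    then show "j = k" by (simp add: r_def)
  qed
  have "card {..m} \<le> card X" using card_inj_on_le[OF hinj hX] fin by (simp add: X_def)
  then show False by (simp add: m_def)
qed

lemma G_iso:
  fixes T :: "'m list set"
  assumes gt: "game_tree T" and AR: "A \<subseteq> Run T" and cT: "countable T" and cA: "countable A"
    and U: "fin_universal TYPE(nat) (T, A)" and H: "fin_ultrahomogeneous TYPE(nat) (T, A)"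
  shows "games_isomorphic (T, A) G_FL"
proof -
  have tc: "\<forall>t\<in>T. \<forall>k. take k t \<in> T" using gt by (simp add: game_tree_def)
  have root: "[] \<in> T" using G_root[OF U] .
  have dense: "\<And>t. t \<in> T \<Longrightarrow> \<exists>R\<in>A. run_prefix R (length t) = t" using G_dense[OF gt AR U H] by blast
  have infch: "\<And>t. t \<in> T \<Longrightarrow> infinite {x. t @ [x] \<in> T}" using G_infch[OF gt AR U H] by blast
  define ch where "ch t = {x. t @ [x] \<in> T}" for t
  have cch: "countable (ch t)" if "t \<in> T" for t
  proof -
    have "ch t \<subseteq> (\<lambda>s. s ! length t) ` T" unfolding ch_def by force
    then show ?thesis using cT by (meson countable_image countable_subset)
  qed
  have Ane: "A \<noteq> {}" using dense[OF root] by blast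
  define a where "a = from_nat_into A"
  define J :: "nat set" where "J = UNIV"
  have aA: "a j \<in> A" for j using Ane by (simp add: a_def from_nat_into)
  define d where "d t = a (LEAST j. j \<in> thr a J t) (length t)" for t
  have thrne: "thr a J t \<noteq> {}" if "t \<in> T" for t
  proof -
    from dense[OF that] obtain R where "R \<in> A" "run_prefix R (length t) = t" by blast
    moreover obtain k where "a k = R" using from_nat_into_surj[OF cA \<open>R \<in> A\<close>] a_def by blast
    ultimately show ?thesis by (auto simp: thr_def J_def)
  qed
  have zc_iff: "zc a J t x \<longleftrightarrow> x = d t" if "t \<in> T" for t x
    using thrne[OF that] by (simp add: zc_def d_def)
  have dch: "d t \<in> ch t" if "t \<in> T" for t
  proof -
    define L where "L = (LEAST j. j \<in> thr a J t)"
    have "L \<in> thr a J t" unfolding L_def using thrne[OF that] by (metis LeastI ex_in_conv)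
    then have p: "run_prefix (a L) (length t) = t" by (simp add: thr_def)
    have "run_prefix (a L) (Suc (length t)) \<in> T" using aA AR by (auto simp: Run_def)
    then show ?thesis using p by (simp add: rp_Suc ch_def d_def L_def)
  qed
  define \<sigma> where "\<sigma> t x = (if zc a J t x then 0 else Suc (to_nat_on (ch t - {d t}) x))" for t x
  define h where "h = nm \<sigma>"
  have ch_h: "chronological h T UNIV" unfolding h_def by (rule nm_chron) simp
  have inj_h: "inj_on h T" unfolding h_def
  proof (rule nm_inj[OF tc], intro ballI)
    fix t assume tT: "t \<in> T"
    show "inj_on (\<sigma> t) {x. t @ [x] \<in> T}"
    proof
      fix x y assume x: "x \<in> {x. t @ [x] \<in> T}" and y: "y \<in> {x. t @ [x] \<in> T}" and e: "\<sigma> t x = \<sigma> t y"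
      show "x = y"
      proof (cases "x = d t")
        case True
        then have "y = d t" using e zc_iff[OF tT] by (simp add: \<sigma>_def split: if_splits)
        then show ?thesis using True by simp
      next
        case False
        then have "y \<noteq> d t" and eq: "to_nat_on (ch t - {d t}) x = to_nat_on (ch t - {d t}) y"
          using e zc_iff[OF tT] by (simp_all add: \<sigma>_def split: if_splits)
        moreover have "x \<in> ch t - {d t}" "y \<in> ch t - {d t}" using x y False \<open>y \<noteq> d t\<close> by (auto simp: ch_def)
        moreover have "countable (ch t - {d t})" using cch[OF tT] by auto
        ultimately show ?thesis by (metis from_nat_into_to_nat_on)
      qed
    qed
  qed
  have surj_h: "\<exists>t\<in>T. h t = ys" for ys unfolding h_def
  proof (rule nm_surj[OF root], intro ballI allI)
    fix t y assume tT: "t \<in> T"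
    show "\<exists>x. t @ [x] \<in> T \<and> \<sigma> t x = y"
    proof (cases y)
      case 0
      then show ?thesis using dch[OF tT] zc_iff[OF tT] by (auto simp: ch_def \<sigma>_def)
    next
      case (Suc m)
      define E where "E = ch t - {d t}"
      have cE: "countable E" using cch[OF tT] by (simp add: E_def)
      have iE: "infinite E" using infch[OF tT] by (simp add: E_def ch_def)
      define x where "x = from_nat_into E m"
      have xE: "x \<in> E" unfolding x_def using iE by (intro from_nat_into) auto
      have "to_nat_on E x = m" unfolding x_def using cE iE by simp
      then have "\<sigma> t x = y" using xE zc_iff[OF tT] Suc by (simp add: \<sigma>_def E_def)
      then show ?thesis using xE by (auto simp: E_def ch_def)
    qed
  qed
  have bij_h: "bij_betw h T UNIV" using inj_h surj_h ch_h
    by (auto simp: bij_betw_def image_def) (metis)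
  have fb0: "fbar h R n = 0 \<longleftrightarrow> zc a J (run_prefix R n) (R n)" for R n
    by (simp add: h_def fbar_nm \<sigma>_def)
  have "fbar h ` A = c00"
  proof
    show "fbar h ` A \<subseteq> c00"
    proof
      fix R' assume "R' \<in> fbar h ` A"
      then obtain R where R: "R \<in> A" "R' = fbar h R" by blast
      obtain k where k: "a k = R" using from_nat_into_surj[OF cA R(1)] a_def by blast
      obtain N where "\<forall>n\<ge>N. zc a J (run_prefix (a k) n) (a k n)" using K1[of k J a] by (auto simp: J_def)
      then show "R' \<in> c00" using R k fb0 by (auto simp: c00_def)
    qed
  next
    show "c00 \<subseteq> fbar h ` A"
    proof
      fix R' assume R': "R' \<in> c00"
      have "R' \<in> Run UNIV" by (simp add: Run_def)
      then obtain R where R: "R \<in> Run T" "fbar h R = R'" using fbar_surj[OF ch_h bij_h tc] by blast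
      obtain N where "\<forall>n\<ge>N. R' n = 0" using R' by (auto simp: c00_def)
      then have "\<forall>n\<ge>N. zc a J (run_prefix R n) (R n)" using fb0 R by auto
      then obtain j where "R = a j" using K2 by blast
      then show "R' \<in> fbar h ` A" using R aA by blast
    qed
  qed
  then have "game_iso h (T, A) G_FL" using ch_h bij_h by (simp add: game_iso_def G_FL_def)
  then show ?thesis by (auto simp: games_isomorphic_def)
qed

theorem mainTheorem6:
  fixes G :: "'m list set \<times> (nat \<Rightarrow> 'm) set"
  shows "is_game G_FL \<and> countable_game G_FL
         \<and> fin_universal TYPE('c) G_FL \<and> fin_ultrahomogeneous TYPE('c) G_FL
         \<and> (is_game G \<and> countable_game G \<and> fin_universal TYPE(nat) G
              \<and> fin_ultrahomogeneous TYPE(nat) G \<longrightarrow> games_isomorphic G G_FL)"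
proof (intro conjI impI)
  show "is_game G_FL" by (rule GFL_game)
  show "countable_game G_FL" by (rule GFL_countable)
  show "fin_universal TYPE('c) G_FL" by (rule GFL_universal)
  show "fin_ultrahomogeneous TYPE('c) G_FL" by (rule GFL_homog)
next
  assume as: "is_game G \<and> countable_game G \<and> fin_universal TYPE(nat) G \<and> fin_ultrahomogeneous TYPE(nat) G"
  obtain T A where G: "G = (T, A)" by (cases G) blast
  show "games_isomorphic G G_FL" unfolding G
    by (rule G_iso) (use as G in \<open>auto simp: is_game_def countable_game_def\<close>)
qed

end
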